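(* Let $T$, $\mathcal{S}=\mathcal{S}_+\cup\mathcal{S}_-$, $\Psi$, $U$, $\lambda$ and $P_\lambda$ be as in the context. Consider the following three discrete-time QBDs on phase space $\mathcal{S}$: (i) the QBD with blocks $\Delta_{-1}=\frac12\begin{bmatrix}0&0\\0&I\end{bmatrix}$, $\Delta_0=\begin{bmatrix}0&P_{\lambda+-}\\0&\frac12P_{\lambda--}\end{bmatrix}$, $\Delta_1=\begin{bmatrix}P_{\lambda++}&0\\\frac12P_{\lambda-+}&0\end{bmatrix}$; (ii) the QBD with blocks $A'_{-1}=\frac12\begin{bmatrix}0&0\\0&I\end{bmatrix}$, $A'_0=\frac12\begin{bmatrix}I&P_{\lambda+-}\\0&P_{\lambda--}\end{bmatrix}$, $A'_1=\frac12\begin{bmatrix}P_{\lambda++}&0\\P_{\lambda-+}&0\end{bmatrix}$; (iii) the QBD with blocks $A_{-1}=\begin{bmatrix}0&0\\0&(I-\lambda^{-1}U)^{-1}\end{bmatrix}$, $A_0=\begin{bmatrix}0&P_{\lambda+-}\\0&0\end{bmatrix}$, $A_1=\begin{bmatrix}P_{\lambda++}&0\\0&0\end{bmatrix}$. Then the QBD in (ii) has the same $\mathcal{G}$-matrix as the QBD in (i) and the same $\mathcal{G}$-matrix as the QBD in (iii).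
   Context: $T$ is the generator of a continuous-time Markov chain on a finite set $\mathcal{S}=\mathcal{S}_+\cup\mathcal{S}_-$ (disjoint, both nonempty), partitioned into blocks $T_{++},T_{+-},T_{-+},T_{--}$ according to $\mathcal{S}_\pm$. $\Psi$ is the minimal nonnegative solution of $T_{+-}+\Psi T_{--}+T_{++}\Psi+\Psi T_{-+}\Psi=0$ (the first-return probability matrix of the unit-rate fluid queue with phase generator $T$, rates $+1$ on $\mathcal{S}_+$ and $-1$ on $\mathcal{S}_-$), and $U:=T_{--}+T_{-+}\Psi$. $\lambda>0$ satisfies $\lambda\ge\max_i|T_{ii}|$ and $P_\lambda:=I+\lambda^{-1}T$ with blocks $P_{\lambda++}$ etc. A discrete-time quasi-birth-death process (QBD) with transition blocks $L_{-1},L_0,L_1$ is a Markov chain $\{(Y_n,\kappa_n)\}$ on $\mathbb{Z}\times\mathcal{S}$ with $\mathbb{P}[Y_n=k+d,\kappa_n=j\mid Y_{n-1}=k,\kappa_{n-1}=i]=(L_d)_{ij}$ for $d\in\{-1,0,1\}$. Its $\mathcal{G}$-matrix has entries $\mathcal{G}_{ij}=\mathbb{P}[\theta<\infty,\kappa_\theta=j\mid Y_0=k,\kappa_0=i]$ with $\theta=\inf\{n>0:Y_n=k-1\}$. Matrices are partitioned into blocks according to $\mathcal{S}_+,\mathcal{S}_-$. *)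

theory Defs
  imports "HOL-Analysis.Analysis"
begin

text \<open>Matrices indexed by a finite phase space 's are functions 's \<Rightarrow> 's \<Rightarrow> real.
  The partition of the phase space is given by the set Sp (= S_+); S_- is its complement.\<close>

type_synonym 's rmat = "'s \<Rightarrow> 's \<Rightarrow> real"

definition idm :: "'s rmat" where
  "idm i j = (if i = j then 1 else 0)"

definition zm :: "'s rmat" where
  "zm i j = 0"

definition Sm :: "'s set \<Rightarrow> 's set" where
  "Sm Sp = - Sp"

definition blk :: "'s set \<Rightarrow> 's rmat \<Rightarrow> 's rmat \<Rightarrow> 's rmat \<Rightarrow> 's rmat \<Rightarrow> 's rmat" where
  "blk Sp A B C D i j =
     (if i \<in> Sp then (if j \<in> Sp then A i j else B i j)
      else (if j \<in> Sp then C i j else D i j))"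

definition smul :: "real \<Rightarrow> 's rmat \<Rightarrow> 's rmat" where
  "smul c M i j = c * M i j"

definition is_generator :: "('s::finite) rmat \<Rightarrow> bool" where
  "is_generator T \<longleftrightarrow> (\<forall>i j. i \<noteq> j \<longrightarrow> T i j \<ge> 0) \<and> (\<forall>i. (\<Sum>j\<in>UNIV. T i j) = 0)"

text \<open>Left-hand side of the Riccati equation
  T_{+-} + Psi T_{--} + T_{++} Psi + Psi T_{-+} Psi, at entry (i,j), i in S+, j in S-.\<close>
definition riccati :: "('s::finite) set \<Rightarrow> 's rmat \<Rightarrow> 's rmat \<Rightarrow> 's \<Rightarrow> 's \<Rightarrow> real" where
  "riccati Sp T X i j =
     T i j + (\<Sum>k\<in>Sm Sp. X i k * T k j) + (\<Sum>k\<in>Sp. T i k * X k j)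
       + (\<Sum>k\<in>Sm Sp. \<Sum>l\<in>Sp. X i k * T k l * X l j)"

definition nonneg_riccati_sol :: "('s::finite) set \<Rightarrow> 's rmat \<Rightarrow> 's rmat \<Rightarrow> bool" where
  "nonneg_riccati_sol Sp T X \<longleftrightarrow>
     (\<forall>i\<in>Sp. \<forall>j\<in>Sm Sp. X i j \<ge> 0 \<and> riccati Sp T X i j = 0)"

text \<open>Psi is the minimal nonnegative solution (only its S+ x S- block is meaningful).\<close>
definition min_nonneg_riccati_sol :: "('s::finite) set \<Rightarrow> 's rmat \<Rightarrow> 's rmat \<Rightarrow> bool" where
  "min_nonneg_riccati_sol Sp T Psi \<longleftrightarrow>
     nonneg_riccati_sol Sp T Psi \<and>
     (\<forall>X. nonneg_riccati_sol Sp T X \<longrightarrow> (\<forall>i\<in>Sp. \<forall>j\<in>Sm Sp. Psi i j \<le> X i j))"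

text \<open>U = T_{--} + T_{-+} Psi (meaningful on S- x S-).\<close>
definition Umat :: "('s::finite) set \<Rightarrow> 's rmat \<Rightarrow> 's rmat \<Rightarrow> 's rmat" where
  "Umat Sp T Psi i j = T i j + (\<Sum>k\<in>Sp. T i k * Psi k j)"

definition Plam :: "real \<Rightarrow> 's rmat \<Rightarrow> 's rmat" where
  "Plam lam T i j = idm i j + T i j / lam"

definition inv_on :: "('s::finite) set \<Rightarrow> 's rmat \<Rightarrow> 's rmat" where
  "inv_on A M = (SOME B. \<forall>i\<in>A. \<forall>j\<in>A. (\<Sum>k\<in>A. M i k * B k j) = idm i j)"

text \<open>Taboo probabilities of the QBD with blocks Lm (level -1), L0, L1, started at level 0
  (by level-homogeneity, any starting level k gives the same values, levels shifted by k):
  taboo n i l j = P[Y_n = l, kappa_n = j, Y_m >= 0 for 1 <= m <= n | Y_0 = 0, kappa_0 = i].\<close>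
fun taboo :: "('s::finite) rmat \<Rightarrow> 's rmat \<Rightarrow> 's rmat \<Rightarrow> nat \<Rightarrow> 's \<Rightarrow> nat \<Rightarrow> 's \<Rightarrow> real" where
  "taboo Lm L0 L1 0 i l j = (if l = 0 \<and> i = j then 1 else 0)"
| "taboo Lm L0 L1 (Suc n) i l j =
     (\<Sum>k\<in>UNIV. taboo Lm L0 L1 n i l k * L0 k j
               + (if l > 0 then taboo Lm L0 L1 n i (l - 1) k * L1 k j else 0)
               + taboo Lm L0 L1 n i (Suc l) k * Lm k j)"

text \<open>G-matrix: G i j = P[theta < infinity, kappa_theta = j | Y_0 = 0, kappa_0 = i],
  theta = first n > 0 with Y_n = -1; the event {theta = n+1, kappa_theta = j} has probability
  sum_k taboo n i 0 k * Lm k j.\<close>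
definition Gmat :: "('s::finite) rmat \<Rightarrow> 's rmat \<Rightarrow> 's rmat \<Rightarrow> 's rmat" where
  "Gmat Lm L0 L1 i j = (\<Sum>n. \<Sum>k\<in>UNIV. taboo Lm L0 L1 n i 0 k * Lm k j)"

end

theory Submission
  imports Defs
begin


type_synonym 's mat = "real^'s^'s"

lemma mm_entry: "((A::real^'n::finite^'m) ** (B::real^'p^'n)) $ i $ j = (\<Sum>k\<in>UNIV. A $ i $ k * B $ k $ j)"
  by (simp add: matrix_matrix_mult_def)

lemma matrix_add_rdistrib: "(((B::'s::finite mat) + C) ** (A::'s::finite mat)) = (B ** A) + (C ** A)"
  by (simp add: vec_eq_iff mm_entry sum.distrib algebra_simps)

lemma mm_sum_left: "(A::'s::finite mat) ** (\<Sum>x\<in>S. (F x :: 's mat)) = (\<Sum>x\<in>S. A ** F x)"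
  by (induction S rule: infinite_finite_induct) (auto simp: matrix_add_ldistrib)
lemma mm_sum_right: "(\<Sum>x\<in>S. (F x :: 's mat)) ** (A::'s::finite mat) = (\<Sum>x\<in>S. F x ** A)"
  by (induction S rule: infinite_finite_induct) (auto simp: matrix_add_rdistrib)

lemma mat_le_iff: "(A::'s::finite mat) \<le> B \<longleftrightarrow> (\<forall>i j. A$i$j \<le> B$i$j)"
  by (simp add: less_eq_vec_def)

lemma mm_nonneg: "0 \<le> (A::'s::finite mat) \<Longrightarrow> 0 \<le> (B::'s mat) \<Longrightarrow> 0 \<le> A ** B"
  unfolding mat_le_iff by (auto simp: mm_entry intro!: sum_nonneg)

lemma mm_mono_right: "0 \<le> (A::'s::finite mat) \<Longrightarrow> (B::'s mat) \<le> C \<Longrightarrow> A ** B \<le> A ** C"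
  unfolding mat_le_iff by (auto simp: mm_entry intro!: sum_mono mult_left_mono)
lemma mm_mono_left: "0 \<le> (A::'s::finite mat) \<Longrightarrow> (B::'s mat) \<le> C \<Longrightarrow> B ** A \<le> C ** A"
  unfolding mat_le_iff by (auto simp: mm_entry intro!: sum_mono mult_right_mono)

fun fA :: "('s::finite) mat \<Rightarrow> 's mat \<Rightarrow> 's mat \<Rightarrow> nat \<Rightarrow> nat \<Rightarrow> 's mat" where
  "fA Lm L0 L1 0 a = (if a = 0 then Lm else 0)"
| "fA Lm L0 L1 (Suc n) a = L0 ** fA Lm L0 L1 n a + L1 ** fA Lm L0 L1 n (Suc a)
     + (if a = 0 then 0 else Lm ** fA Lm L0 L1 n (a - 1))"

fun tbB :: "('s::finite) mat \<Rightarrow> 's mat \<Rightarrow> 's mat \<Rightarrow> nat \<Rightarrow> nat \<Rightarrow> nat \<Rightarrow> 's mat" where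
  "tbB Lm L0 L1 0 a l = (if a = l then mat 1 else 0)"
| "tbB Lm L0 L1 (Suc n) a l = L0 ** tbB Lm L0 L1 n a l + L1 ** tbB Lm L0 L1 n (Suc a) l
     + (if a = 0 then 0 else Lm ** tbB Lm L0 L1 n (a - 1) l)"

lemma tbB_forward:
  "tbB Lm L0 L1 (Suc n) a l = tbB Lm L0 L1 n a l ** L0
     + (if l = 0 then 0 else tbB Lm L0 L1 n a (l - 1) ** L1) + tbB Lm L0 L1 n a (Suc l) ** Lm"
proof (induction n arbitrary: a l)
  case 0
  then show ?case by (cases a; cases l; auto)
next
  case (Suc n)
  let ?B = "tbB Lm L0 L1"
  have "?B (Suc (Suc n)) a l = L0 ** ?B (Suc n) a l + L1 ** ?B (Suc n) (Suc a) l
     + (if a = 0 then 0 else Lm ** ?B (Suc n) (a - 1) l)" by simp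
  also have "\<dots> = ?B (Suc n) a l ** L0
     + (if l = 0 then 0 else ?B (Suc n) a (l - 1) ** L1) + ?B (Suc n) a (Suc l) ** Lm"
    apply (subst (1 2 3) Suc.IH)
    apply (subst (1 2 3) tbB.simps(2))
    by (cases "a = 0"; cases "l = 0"; simp add: matrix_add_ldistrib matrix_add_rdistrib matrix_mul_assoc algebra_simps)
  finally show ?case .
qed

definition vm :: "('s::finite) rmat \<Rightarrow> 's mat" where
  "vm A = (\<chi> i j. A i j)"

lemma vm_entry[simp]: "vm A $ i $ j = A i j"
  by (simp add: vm_def)

lemma taboo_tbB: "taboo Lm L0 L1 n i l j = tbB (vm Lm) (vm L0) (vm L1) n 0 l $ i $ j"
proof (induction n arbitrary: l j)
  case 0
  then show ?case by (simp add: mat_def)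
next
  case (Suc n)
  show ?case
    unfolding tbB_forward taboo.simps Suc.IH
    by (simp add: mm_entry sum.distrib)
qed

lemma fA_tbB: "fA Lm L0 L1 n a = tbB Lm L0 L1 n a 0 ** Lm"
  by (induction n arbitrary: a) (auto simp: matrix_add_rdistrib matrix_mul_assoc)

lemma Gmat_fA: "Gmat Lm L0 L1 i j = (\<Sum>n. fA (vm Lm) (vm L0) (vm L1) n 0 $ i $ j)"
  unfolding Gmat_def fA_tbB taboo_tbB by (simp add: mm_entry)

lemma fA_nonneg:
  assumes "0 \<le> Lm" "0 \<le> L0" "0 \<le> L1"
  shows "0 \<le> fA Lm L0 L1 n a"
  by (induction n arbitrary: a) (auto simp: assms intro!: add_nonneg_nonneg mm_nonneg)

lemma fA_conv:
  "fA Lm L0 L1 n (a + b + 1) = (\<Sum>m<n. fA Lm L0 L1 m b ** fA Lm L0 L1 (n - 1 - m) a)"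
proof (induction n arbitrary: a b)
  case 0
  then show ?case by simp
next
  case (Suc n)
  let ?f = "fA Lm L0 L1"
  have A: "(\<Sum>m<n. ?f (Suc m) b ** ?f (n - 1 - m) a)
     = L0 ** ?f n (a + b + 1) + L1 ** ?f n (a + Suc b + 1)
       + (if b = 0 then 0 else Lm ** ?f n (a + (b - 1) + 1))"
    unfolding Suc.IH
    by (simp add: matrix_add_rdistrib sum.distrib mm_sum_left matrix_mul_assoc)
  have B: "(if b = 0 then Lm ** ?f n a else 0) + (if b = 0 then 0 else Lm ** ?f n (a + (b - 1) + 1))
     = Lm ** ?f n (a + b)" by auto
  have "(\<Sum>m<Suc n. ?f m b ** ?f (Suc n - 1 - m) a)
      = ?f 0 b ** ?f n a + (\<Sum>m<n. ?f (Suc m) b ** ?f (n - 1 - m) a)"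
    unfolding sum.lessThan_Suc_shift by simp
  also have "\<dots> = L0 ** ?f n (a + b + 1) + L1 ** ?f n (Suc (a + b + 1)) + Lm ** ?f n (a + b)"
    unfolding A using B by (auto simp: algebra_simps)
  also have "\<dots> = ?f (Suc n) (a + b + 1)" by simp
  finally show ?case by simp
qed

lemma fA_sum_Suc:
  "(\<Sum>n<N. fA Lm L0 L1 (Suc n) a) = L0 ** (\<Sum>n<N. fA Lm L0 L1 n a) + L1 ** (\<Sum>n<N. fA Lm L0 L1 n (Suc a))
     + (if a = 0 then 0 else Lm ** (\<Sum>n<N. fA Lm L0 L1 n (a - 1)))"
  by (simp add: sum.distrib mm_sum_left)

lemma W_bound:
  assumes nn: "0 \<le> Lm" "0 \<le> L0" "0 \<le> L1" and R: "0 \<le> (R::'s::finite mat)"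
    and W0: "\<And>a. 0 \<le> W a"
    and Wsup: "\<And>a. (if a = 0 then Lm ** R else 0) + L0 ** W a + L1 ** W (Suc a)
                    + (if a = 0 then 0 else Lm ** W (a - 1)) \<le> W a"
  shows "(\<Sum>n<N. fA Lm L0 L1 n a) ** R \<le> W a"
proof (induction N arbitrary: a)
  case 0
  then show ?case using W0 by simp
next
  case (Suc N)
  let ?S = "\<lambda>a. (\<Sum>n<N. fA Lm L0 L1 n a)"
  have "(\<Sum>n<Suc N. fA Lm L0 L1 n a) ** R
     = (if a = 0 then Lm ** R else 0) + L0 ** (?S a ** R) + L1 ** (?S (Suc a) ** R)
       + (if a = 0 then 0 else Lm ** (?S (a - 1) ** R))"
    unfolding sum.lessThan_Suc_shift fA_sum_Suc
    by (simp add: matrix_add_rdistrib matrix_mul_assoc)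
  also have "\<dots> \<le> (if a = 0 then Lm ** R else 0) + L0 ** W a + L1 ** W (Suc a)
                    + (if a = 0 then 0 else Lm ** W (a - 1))"
    using Suc.IH nn by (auto intro!: add_mono mm_mono_right)
  also have "\<dots> \<le> W a" by (rule Wsup)
  finally show ?case .
qed

lemma fA_summable:
  assumes nn: "0 \<le> Lm" "0 \<le> L0" "0 \<le> L1"
    and bd: "\<And>N. (\<Sum>n<N. fA Lm L0 L1 n a) \<le> (W::'s::finite mat)"
  shows "summable (\<lambda>n. fA Lm L0 L1 n a $ i $ j)" "(\<Sum>n. fA Lm L0 L1 n a $ i $ j) \<le> W $ i $ j"
proof -
  have nn': "0 \<le> fA Lm L0 L1 n a $ i $ j" for n
    using fA_nonneg[OF nn, of n a] by (simp add: mat_le_iff)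
  have b: "(\<Sum>n<N. fA Lm L0 L1 n a $ i $ j) \<le> W $ i $ j" for N
    using bd[of N] by (simp add: mat_le_iff)
  show s: "summable (\<lambda>n. fA Lm L0 L1 n a $ i $ j)"
    by (rule summableI_nonneg_bounded[OF nn' b])
  show "(\<Sum>n. fA Lm L0 L1 n a $ i $ j) \<le> W $ i $ j"
    by (rule suminf_le_const[OF s b])
qed

lemma qbd_solution:
  fixes Lm L0 L1 :: "'s::finite mat"
  assumes nn: "0 \<le> Lm" "0 \<le> L0" "0 \<le> L1"
    and s0: "\<And>i j. summable (\<lambda>n. fA Lm L0 L1 n 0 $ i $ j)"
    and s1: "\<And>i j. summable (\<lambda>n. fA Lm L0 L1 n 1 $ i $ j)"
  defines "g \<equiv> \<lambda>a i j. (\<Sum>n. fA Lm L0 L1 n a $ i $ j)"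
  shows "g 0 i j = Lm $ i $ j + (\<Sum>k\<in>UNIV. L0 $ i $ k * g 0 k j)
            + (\<Sum>k\<in>UNIV. L1 $ i $ k * (\<Sum>l\<in>UNIV. g 0 k l * g 0 l j))"
proof -
  let ?f = "fA Lm L0 L1"
  have g1: "g 1 k j = (\<Sum>l\<in>UNIV. g 0 k l * g 0 l j)" for k j
  proof -
    have nn0: "0 \<le> ?f n 0 $ i $ j" for n i j
      using fA_nonneg[OF nn, of n 0] by (simp add: mat_le_iff)
    have an: "summable (\<lambda>n. norm (?f n 0 $ i $ j))" for i j
      using s0[of i j] nn0 by simp
    have e: "?f (Suc n) 1 $ k $ j = (\<Sum>l\<in>UNIV. \<Sum>m\<le>n. ?f m 0 $ k $ l * ?f (n - m) 0 $ l $ j)" for n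
    proof -
      have "?f (Suc n) 1 = (\<Sum>m<Suc n. ?f m 0 ** ?f (n - m) 0)"
        using fA_conv[of Lm L0 L1 "Suc n" 0 0] by simp
      then show ?thesis
        by (simp add: mm_entry lessThan_Suc_atMost sum.swap[of _ "{..n}"])
    qed
    have "g 1 k j = (\<Sum>n. ?f (Suc n) 1 $ k $ j)"
      unfolding g_def using suminf_split_head[OF s1[of k j]] by simp
    also have "\<dots> = (\<Sum>n. \<Sum>l\<in>UNIV. \<Sum>m\<le>n. ?f m 0 $ k $ l * ?f (n - m) 0 $ l $ j)"
      unfolding e ..
    also have "\<dots> = (\<Sum>l\<in>UNIV. \<Sum>n. \<Sum>m\<le>n. ?f m 0 $ k $ l * ?f (n - m) 0 $ l $ j)"
      by (rule suminf_sum) (rule summable_Cauchy_product[OF an an])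
    also have "\<dots> = (\<Sum>l\<in>UNIV. g 0 k l * g 0 l j)"
      unfolding g_def by (rule sum.cong[OF refl], rule Cauchy_product[OF an an, symmetric])
    finally show ?thesis .
  qed
  have e: "?f (Suc n) 0 $ i $ j = (\<Sum>k\<in>UNIV. L0 $ i $ k * ?f n 0 $ k $ j) + (\<Sum>k\<in>UNIV. L1 $ i $ k * ?f n 1 $ k $ j)" for n
    by (simp add: mm_entry)
  have "g 0 i j = ?f 0 0 $ i $ j + (\<Sum>n. ?f (Suc n) 0 $ i $ j)"
    unfolding g_def using suminf_split_head[OF s0[of i j]] by simp
  also have "(\<Sum>n. ?f (Suc n) 0 $ i $ j) = (\<Sum>n. (\<Sum>k\<in>UNIV. L0 $ i $ k * ?f n 0 $ k $ j)) + (\<Sum>n. (\<Sum>k\<in>UNIV. L1 $ i $ k * ?f n 1 $ k $ j))"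
    unfolding e
    by (rule suminf_add[symmetric]; intro summable_sum summable_mult s0 s1)
  also have "(\<Sum>n. (\<Sum>k\<in>UNIV. L0 $ i $ k * ?f n 0 $ k $ j)) = (\<Sum>k\<in>UNIV. L0 $ i $ k * g 0 k j)"
    unfolding g_def by (subst suminf_sum) (auto intro!: summable_mult s0 suminf_mult sum.cong)
  also have "(\<Sum>n. (\<Sum>k\<in>UNIV. L1 $ i $ k * ?f n 1 $ k $ j)) = (\<Sum>k\<in>UNIV. L1 $ i $ k * g 1 k j)"
    using s1 unfolding g_def by (subst suminf_sum) (auto intro!: summable_mult suminf_mult sum.cong)
  finally show ?thesis unfolding g1 by simp
qed

fun mpow :: "'s::finite mat \<Rightarrow> nat \<Rightarrow> 's mat" where
  "mpow X 0 = mat 1"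
| "mpow X (Suc n) = X ** mpow X n"

lemma mat1_nonneg: "0 \<le> (mat 1 :: 's::finite mat)"
  by (simp add: mat_le_iff mat_def)

lemma mpow_nonneg: "0 \<le> X \<Longrightarrow> 0 \<le> mpow X n"
proof (induction n)
  case 0
  then show ?case by (simp add: mat1_nonneg)
next
  case (Suc n)
  then show ?case by (simp add: mm_nonneg)
qed

definition rnn :: "('s::finite) rmat \<Rightarrow> bool" where
  "rnn A \<longleftrightarrow> (\<forall>i j. 0 \<le> A i j)"

lemma vm_nonneg: "rnn A \<Longrightarrow> 0 \<le> vm A"
  by (simp add: rnn_def mat_le_iff)

lemma qbd_min:
  fixes Lm L0 L1 X :: "('s::finite) rmat"
  assumes nn: "rnn Lm" "rnn L0" "rnn L1" and X0: "rnn X"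
    and sup: "\<And>i j. Lm i j + (\<Sum>k\<in>UNIV. L0 i k * X k j) + (\<Sum>k\<in>UNIV. L1 i k * (\<Sum>l\<in>UNIV. X k l * X l j)) \<le> X i j"
  shows "summable (\<lambda>n. fA (vm Lm) (vm L0) (vm L1) n a $ i $ j)" "Gmat Lm L0 L1 i j \<le> X i j"
proof -
  let ?X = "vm X"
  have nn': "0 \<le> vm Lm" "0 \<le> vm L0" "0 \<le> vm L1" "0 \<le> ?X" using nn X0 by (auto intro: vm_nonneg)
  have V: "vm Lm + vm L0 ** ?X + vm L1 ** (?X ** ?X) \<le> ?X"
    using sup by (simp add: mat_le_iff mm_entry)
  have Wsup: "(if a = 0 then vm Lm ** mat 1 else 0) + vm L0 ** mpow ?X (Suc a) + vm L1 ** mpow ?X (Suc (Suc a))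
                    + (if a = 0 then 0 else vm Lm ** mpow ?X (Suc (a - 1))) \<le> mpow ?X (Suc a)" for a
  proof -
    have "(if a = 0 then vm Lm ** mat 1 else 0) + vm L0 ** mpow ?X (Suc a) + vm L1 ** mpow ?X (Suc (Suc a))
                    + (if a = 0 then 0 else vm Lm ** mpow ?X (Suc (a - 1)))
         = (vm Lm + vm L0 ** ?X + vm L1 ** (?X ** ?X)) ** mpow ?X a"
      by (cases a) (auto simp: matrix_add_rdistrib matrix_mul_assoc)
    also have "\<dots> \<le> ?X ** mpow ?X a"
      by (rule mm_mono_left[OF mpow_nonneg[OF nn'(4)] V])
    finally show ?thesis by simp
  qed
  have bd: "(\<Sum>n<N. fA (vm Lm) (vm L0) (vm L1) n a) \<le> mpow ?X (Suc a)" for N a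
  proof -
    have "(\<Sum>n<N. fA (vm Lm) (vm L0) (vm L1) n a) ** mat 1 \<le> mpow ?X (Suc a)"
      by (rule W_bound[OF nn'(1-3) mat1_nonneg, of "\<lambda>a. mpow ?X (Suc a)"])
        (use Wsup mpow_nonneg[OF nn'(4)] nn'(4) in \<open>auto intro: mm_nonneg\<close>)
    then show ?thesis by simp
  qed
  show "summable (\<lambda>n. fA (vm Lm) (vm L0) (vm L1) n a $ i $ j)"
    by (rule fA_summable(1)[OF nn'(1-3) bd])
  show "Gmat Lm L0 L1 i j \<le> X i j"
    unfolding Gmat_fA using fA_summable(2)[OF nn'(1-3) bd, of 0 i j] by simp
qed

lemma qbd_stoch:
  fixes Lm L0 L1 :: "('s::finite) rmat"
  assumes nn: "rnn Lm" "rnn L0" "rnn L1"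
    and rs: "\<And>i. (\<Sum>j\<in>UNIV. Lm i j + L0 i j + L1 i j) \<le> 1"
  shows "summable (\<lambda>n. fA (vm Lm) (vm L0) (vm L1) n a $ i $ j)"
    "(\<Sum>j\<in>UNIV. Gmat Lm L0 L1 i j) \<le> 1"
proof -
  let ?J = "(\<chi> i j. 1) :: 's mat"
  let ?f = "fA (vm Lm) (vm L0) (vm L1)"
  have nn': "0 \<le> vm Lm" "0 \<le> vm L0" "0 \<le> vm L1" using nn by (auto intro: vm_nonneg)
  have J0: "0 \<le> ?J" by (simp add: mat_le_iff)
  have Wsup: "(if a = 0 then vm Lm ** ?J else 0) + vm L0 ** ?J + vm L1 ** ?J
                    + (if a = 0 then 0 else vm Lm ** ?J) \<le> ?J" for a
  proof -
    have "(if a = 0 then vm Lm ** ?J else 0) + vm L0 ** ?J + vm L1 ** ?J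
                    + (if a = 0 then 0 else vm Lm ** ?J) = (vm Lm + vm L0 + vm L1) ** ?J"
      by (auto simp: matrix_add_rdistrib)
    also have "\<dots> \<le> ?J" using rs by (simp add: mat_le_iff mm_entry sum.distrib)
    finally show ?thesis .
  qed
  have bd0: "(\<Sum>n<M. ?f n c) ** ?J \<le> ?J" for M c
    by (rule W_bound[OF nn' J0, of "\<lambda>a. ?J"]; (rule J0 | rule Wsup))
  have rowb: "(\<Sum>k\<in>UNIV. (\<Sum>n<M. ?f n c $ ii $ k)) \<le> 1" for M c ii
    using bd0[of c M] by (simp add: mat_le_iff mm_entry)
  have nnf: "0 \<le> ?f n a $ i $ j" for n a i j
    using fA_nonneg[OF nn', of n a] by (simp add: mat_le_iff)
  have bd: "(\<Sum>n<N. ?f n a) \<le> ?J" for N a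
  proof -
    have "(\<Sum>n<N. ?f n a $ i $ j) \<le> 1" for i j
    proof -
      have "(\<Sum>n<N. ?f n a $ i $ j) \<le> (\<Sum>k\<in>UNIV. (\<Sum>n<N. ?f n a $ i $ k))"
        by (rule member_le_sum) (auto intro: sum_nonneg nnf)
      then show ?thesis by (rule order_trans[OF _ rowb])
    qed
    then show ?thesis by (simp add: mat_le_iff)
  qed
  have sm: "summable (\<lambda>n. ?f n a $ i $ j)" for a i j
    by (rule fA_summable(1)[OF nn' bd])
  then show "summable (\<lambda>n. ?f n a $ i $ j)" .
  have "(\<Sum>j\<in>UNIV. Gmat Lm L0 L1 i j) = (\<Sum>n. \<Sum>j\<in>UNIV. ?f n 0 $ i $ j)"
    unfolding Gmat_fA by (rule suminf_sum[symmetric]) (rule sm)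
  also have "\<dots> \<le> 1"
  proof (rule suminf_le_const)
    show "summable (\<lambda>n. \<Sum>j\<in>UNIV. ?f n 0 $ i $ j)" by (intro summable_sum sm)
    fix M
    have "(\<Sum>n<M. \<Sum>j\<in>UNIV. ?f n 0 $ i $ j) = (\<Sum>j\<in>UNIV. \<Sum>n<M. ?f n 0 $ i $ j)"
      by (rule sum.swap)
    also have "\<dots> \<le> 1" by (rule rowb)
    finally show "(\<Sum>n<M. \<Sum>j\<in>UNIV. ?f n 0 $ i $ j) \<le> 1" .
  qed
  finally show "(\<Sum>j\<in>UNIV. Gmat Lm L0 L1 i j) \<le> 1" .
qed

lemma qbd_eq:
  fixes Lm L0 L1 :: "('s::finite) rmat"
  assumes nn: "rnn Lm" "rnn L0" "rnn L1"
    and sm: "\<And>a i j. summable (\<lambda>n. fA (vm Lm) (vm L0) (vm L1) n a $ i $ j)"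
  defines "G \<equiv> Gmat Lm L0 L1"
  shows "G i j = Lm i j + (\<Sum>k\<in>UNIV. L0 i k * G k j) + (\<Sum>k\<in>UNIV. L1 i k * (\<Sum>l\<in>UNIV. G k l * G l j))"
proof -
  have nn': "0 \<le> vm Lm" "0 \<le> vm L0" "0 \<le> vm L1" using nn by (auto intro: vm_nonneg)
  show ?thesis
    using qbd_solution[OF nn' sm sm, of i j] unfolding G_def Gmat_fA by simp
qed

lemma Gmat_nonneg:
  fixes Lm L0 L1 :: "('s::finite) rmat"
  assumes nn: "rnn Lm" "rnn L0" "rnn L1"
    and sm: "\<And>a i j. summable (\<lambda>n. fA (vm Lm) (vm L0) (vm L1) n a $ i $ j)"
  shows "0 \<le> Gmat Lm L0 L1 i j"
proof -
  have nn': "0 \<le> vm Lm" "0 \<le> vm L0" "0 \<le> vm L1" using nn by (auto intro: vm_nonneg)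
  show ?thesis unfolding Gmat_fA
    by (rule suminf_nonneg[OF sm]) (use fA_nonneg[OF nn'] in \<open>simp add: mat_le_iff\<close>)
qed

lemma fA_zero_col:
  assumes "\<And>k. Lm $ k $ j = 0"
  shows "fA Lm L0 L1 n a $ i $ j = 0"
  using assms by (induction n arbitrary: a i) (auto simp: mm_entry)

lemma Gmat_zero_col:
  assumes "\<And>k. Lm k j = 0"
  shows "Gmat Lm L0 L1 i j = 0"
  unfolding Gmat_fA by (subst fA_zero_col) (auto simp: assms)




lemma sum_split_set: "sum f (UNIV::'s::finite set) = sum f A + sum f (- A)"
proof -
  have "UNIV = A \<union> (-A)" by auto
  then have "sum f (UNIV::'s set) = sum f (A \<union> (-A))" by simp
  also have "\<dots> = sum f A + sum f (-A)" by (rule sum.union_disjoint) auto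
  finally show ?thesis .
qed

definition ext_on :: "'s set \<Rightarrow> ('s::finite) rmat \<Rightarrow> 's mat" where
  "ext_on A K = (\<chi> i j. if i \<in> A then (if j \<in> A then K i j else 0) else idm i j)"

lemma ext_on_mult:
  "(ext_on A K ** ext_on A Z) $ i $ j =
    (if i \<in> A then (if j \<in> A then (\<Sum>k\<in>A. K i k * Z k j) else 0) else idm i j)"
proof -
  have "(ext_on A K ** ext_on A Z) $ i $ j = (\<Sum>k\<in>A. ext_on A K $ i $ k * ext_on A Z $ k $ j)
     + (\<Sum>k\<in>-A. ext_on A K $ i $ k * ext_on A Z $ k $ j)"
    unfolding mm_entry by (rule sum_split_set)
  moreover have "(\<Sum>k\<in>-A. ext_on A K $ i $ k * ext_on A Z $ k $ j) = (if i \<in> A then 0 else if j \<in> A then 0 else idm i j)"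
  proof (cases "i \<in> A")
    case True then show ?thesis by (auto simp: ext_on_def intro!: sum.neutral)
  next
    case False
    have "(\<Sum>k\<in>-A. ext_on A K $ i $ k * ext_on A Z $ k $ j) = (\<Sum>k\<in>-A. if k = i then ext_on A Z $ i $ j else 0)"
      using False by (intro sum.cong) (auto simp: ext_on_def idm_def)
    also have "\<dots> = ext_on A Z $ i $ j" using False by (simp add: sum.delta')
    finally show ?thesis using False by (auto simp: ext_on_def idm_def)
  qed
  moreover have "(\<Sum>k\<in>A. ext_on A K $ i $ k * ext_on A Z $ k $ j) = (if i \<in> A then (if j \<in> A then (\<Sum>k\<in>A. K i k * Z k j) else 0) else 0)"
    by (auto simp: ext_on_def idm_def intro!: sum.neutral sum.cong)
  ultimately show ?thesis by (auto simp: idm_def)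
qed

lemma right_inv_left:
  fixes K Z :: "('s::finite) rmat"
  assumes "\<And>i j. i \<in> A \<Longrightarrow> j \<in> A \<Longrightarrow> (\<Sum>k\<in>A. K i k * Z k j) = idm i j"
  shows "i \<in> A \<Longrightarrow> j \<in> A \<Longrightarrow> (\<Sum>k\<in>A. Z i k * K k j) = idm i j"
proof -
  assume ij: "i \<in> A" "j \<in> A"
  have "ext_on A K ** ext_on A Z = mat 1"
    using assms by (auto simp: vec_eq_iff ext_on_mult mat_def idm_def)
  then have "ext_on A Z ** ext_on A K = mat 1"
    using matrix_left_right_inverse by blast
  then have "(ext_on A Z ** ext_on A K) $ i $ j = mat 1 $ i $ j" by simp
  then show ?thesis using ij by (simp add: ext_on_mult mat_def idm_def)
qed




definition rhs :: "('s::finite) rmat \<Rightarrow> 's rmat \<Rightarrow> 's rmat \<Rightarrow> 's rmat \<Rightarrow> 's rmat" where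
  "rhs Lm L0 L1 X i j = Lm i j + (\<Sum>k\<in>UNIV. L0 i k * X k j) + (\<Sum>k\<in>UNIV. L1 i k * (\<Sum>l\<in>UNIV. X k l * X l j))"

definition zc :: "'s set \<Rightarrow> ('s::finite) rmat \<Rightarrow> bool" where
  "zc Sp X \<longleftrightarrow> (\<forall>i j. j \<in> Sp \<longrightarrow> X i j = 0)"

definition XX :: "'s set \<Rightarrow> ('s::finite) rmat \<Rightarrow> 's rmat" where
  "XX Sp X k j = (\<Sum>l\<in>-Sp. X k l * X l j)"

lemma rhs_blk:
  fixes X :: "('s::finite) rmat"
  assumes z: "zc Sp X"
  shows "rhs (blk Sp zm zm zm Bm) (blk Sp a0 b0 zm d0) (blk Sp a1 zm c1 zm) X i j =
    (if j \<in> Sp then 0 else if i \<in> Sp then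
       (\<Sum>k\<in>Sp. a0 i k * X k j) + (\<Sum>k\<in>-Sp. b0 i k * X k j) + (\<Sum>k\<in>Sp. a1 i k * XX Sp X k j)
     else Bm i j + (\<Sum>k\<in>-Sp. d0 i k * X k j) + (\<Sum>k\<in>Sp. c1 i k * XX Sp X k j))"
proof -
  have XXe: "(\<Sum>l\<in>UNIV. X k l * X l j) = XX Sp X k j" for k j
    unfolding XX_def using z by (subst sum_split_set[of _ Sp]) (simp add: zc_def)
  show ?thesis
  proof (cases "j \<in> Sp")
    case True
    then show ?thesis using z by (simp add: rhs_def zc_def XX_def blk_def zm_def)
  next
    case False
    then show ?thesis
      unfolding rhs_def XXe
      apply (subst sum_split_set[of _ Sp])+
      by (simp add: blk_def zm_def)
  qed
qed




definition QQ :: "'s set \<Rightarrow> ('s::finite) rmat \<Rightarrow> 's rmat \<Rightarrow> 's rmat" where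
  "QQ Sp P X i j = (\<Sum>k\<in>-Sp. P i k * X k j) + (\<Sum>k\<in>Sp. P i k * XX Sp X k j)"

definition CC :: "'s set \<Rightarrow> ('s::finite) rmat \<Rightarrow> 's rmat \<Rightarrow> 's rmat" where
  "CC Sp P X i m = P i m + (\<Sum>k\<in>Sp. P i k * X k m)"

definition KK :: "'s set \<Rightarrow> ('s::finite) rmat \<Rightarrow> 's rmat \<Rightarrow> 's rmat" where
  "KK Sp P X i j = 2 * idm i j - CC Sp P X i j"

lemma sum_idm_right: "j \<in> (A::'s::finite set) \<Longrightarrow> (\<Sum>l\<in>A. X l * idm l j) = (X j :: real)"
  by (simp add: idm_def if_distrib cong: if_cong)
lemma sum_idm_left: "i \<in> (A::'s::finite set) \<Longrightarrow> (\<Sum>l\<in>A. idm i l * X l) = (X i :: real)"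
proof -
  assume "i \<in> A"
  have "(\<Sum>l\<in>A. idm i l * X l) = (\<Sum>l\<in>A. if i = l then X l else 0)"
    by (rule sum.cong) (auto simp: idm_def)
  then show ?thesis using \<open>i \<in> A\<close> by simp
qed

lemma QQ_CC: "QQ Sp P X i j = (\<Sum>m\<in>-Sp. CC Sp P X i m * X m j)"
  unfolding QQ_def CC_def XX_def
  by (simp add: algebra_simps sum.distrib sum_distrib_left sum_distrib_right sum.swap[of _ Sp])

lemma KK_mult:
  assumes "i \<in> -Sp" "j \<in> -Sp"
  shows "(\<Sum>l\<in>-Sp. KK Sp P X i l * Z l j) = 2 * Z i j - (\<Sum>m\<in>-Sp. CC Sp P X i m * Z m j)"
proof -
  have "(\<Sum>l\<in>-Sp. KK Sp P X i l * Z l j) = (\<Sum>l\<in>-Sp. 2 * (idm i l * Z l j)) - (\<Sum>m\<in>-Sp. CC Sp P X i m * Z m j)"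
    unfolding KK_def by (simp add: algebra_simps sum_subtractf)
  also have "(\<Sum>l\<in>-Sp. 2 * (idm i l * Z l j)) = 2 * Z i j"
    using assms by (simp add: sum_distrib_left[symmetric] sum_idm_left)
  finally show ?thesis .
qed

lemma rhs2_eq:
  assumes "zc Sp X"
  shows "rhs (blk Sp zm zm zm (smul (1/2) idm)) (blk Sp (smul (1/2) idm) (smul (1/2) P) zm (smul (1/2) P))
     (blk Sp (smul (1/2) P) zm (smul (1/2) P) zm) X i j =
     (if j \<in> Sp then 0 else if i \<in> Sp then X i j / 2 + QQ Sp P X i j / 2 else idm i j / 2 + QQ Sp P X i j / 2)"
  unfolding rhs_blk[OF assms] QQ_def
  by (auto simp: smul_def sum_idm_left sum_divide_distrib[symmetric])

lemma rhs1_eq: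
  assumes "zc Sp X"
  shows "rhs (blk Sp zm zm zm (smul (1/2) idm)) (blk Sp zm P zm (smul (1/2) P))
     (blk Sp P zm (smul (1/2) P) zm) X i j =
     (if j \<in> Sp then 0 else if i \<in> Sp then QQ Sp P X i j else idm i j / 2 + QQ Sp P X i j / 2)"
  unfolding rhs_blk[OF assms] QQ_def
  by (auto simp: smul_def zm_def sum_divide_distrib[symmetric])

lemma rhs3_eq:
  assumes "zc Sp X"
  shows "rhs (blk Sp zm zm zm M) (blk Sp zm P zm zm)
     (blk Sp P zm zm zm) X i j =
     (if j \<in> Sp then 0 else if i \<in> Sp then QQ Sp P X i j else M i j)"
  unfolding rhs_blk[OF assms] QQ_def
  by (auto simp: zm_def)

lemma riccati_iff:
  fixes T X :: "('s::finite) rmat"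
  assumes lam: "lam > 0" and i: "i \<in> Sp" and j: "j \<in> -Sp"
  shows "riccati Sp T X i j = - lam * ((\<Sum>l\<in>-Sp. X i l * KK Sp (Plam lam T) X l j) - CC Sp (Plam lam T) X i j)"
proof -
  have ij: "idm i j = 0" using i j by (auto simp: idm_def)
  have a: "(\<Sum>l\<in>-Sp. X i l * KK Sp (Plam lam T) X l j)
      = X i j - (\<Sum>l\<in>-Sp. X i l * T l j) / lam - (\<Sum>l\<in>-Sp. \<Sum>k\<in>Sp. X i l * T l k * X k j) / lam"
  proof -
    have e1: "KK Sp (Plam lam T) X l j = idm l j - T l j / lam - (\<Sum>k\<in>Sp. T l k * X k j) / lam" if "l \<in> -Sp" for l
    proof -
      have "(\<Sum>k\<in>Sp. Plam lam T l k * X k j) = (\<Sum>k\<in>Sp. T l k * X k j) / lam"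
        using that by (auto simp: Plam_def idm_def sum_divide_distrib intro!: sum.cong)
      then show ?thesis unfolding KK_def CC_def Plam_def by simp
    qed
    have "(\<Sum>l\<in>-Sp. X i l * KK Sp (Plam lam T) X l j)
       = (\<Sum>l\<in>-Sp. X i l * (idm l j - T l j / lam - (\<Sum>k\<in>Sp. T l k * X k j) / lam))"
      by (rule sum.cong) (auto simp: e1)
    also have "\<dots> = (\<Sum>l\<in>-Sp. X i l * idm l j) - (\<Sum>l\<in>-Sp. X i l * T l j) / lam - (\<Sum>l\<in>-Sp. X i l * (\<Sum>k\<in>Sp. T l k * X k j)) / lam"
      by (simp add: algebra_simps sum_subtractf sum_divide_distrib sum.distrib sum_distrib_left)
    also have "(\<Sum>l\<in>-Sp. X i l * idm l j) = X i j" using j by (rule sum_idm_right)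
    finally show ?thesis by (simp add: sum_distrib_left mult.assoc)
  qed
  have b: "CC Sp (Plam lam T) X i j = T i j / lam + X i j + (\<Sum>k\<in>Sp. T i k * X k j) / lam"
  proof -
    have "(\<Sum>k\<in>Sp. Plam lam T i k * X k j) = (\<Sum>k\<in>Sp. idm i k * X k j) + (\<Sum>k\<in>Sp. T i k * X k j) / lam"
      by (simp add: Plam_def algebra_simps sum.distrib sum_divide_distrib)
    also have "(\<Sum>k\<in>Sp. idm i k * X k j) = X i j" using i by (rule sum_idm_left)
    finally show ?thesis unfolding CC_def Plam_def using ij by simp
  qed
  show ?thesis
    unfolding a b riccati_def Sm_def using lam
    by (simp add: field_simps sum_distrib_left sum_distrib_right sum.distrib)
qed



lemma rnn_zm: "rnn zm" by (simp add: rnn_def zm_def)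
lemma rnn_idm: "rnn idm" by (simp add: rnn_def idm_def)
lemma rnn_smul: "c \<ge> 0 \<Longrightarrow> rnn A \<Longrightarrow> rnn (smul c A)" by (simp add: rnn_def smul_def)
lemma rnn_blk: "rnn a \<Longrightarrow> rnn b \<Longrightarrow> rnn c \<Longrightarrow> rnn d \<Longrightarrow> rnn (blk Sp a b c d)"
  by (simp add: rnn_def blk_def)

lemma qbd_min':
  fixes Lm L0 L1 X :: "('s::finite) rmat"
  assumes "rnn Lm" "rnn L0" "rnn L1" "rnn X"
    and "\<And>i j. rhs Lm L0 L1 X i j \<le> X i j"
  shows "summable (\<lambda>n. fA (vm Lm) (vm L0) (vm L1) n a $ i $ j)" "Gmat Lm L0 L1 i j \<le> X i j"
  using qbd_min[OF assms(1-4)] assms(5) unfolding rhs_def by blast+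

lemma qbd_eq':
  fixes Lm L0 L1 :: "('s::finite) rmat"
  assumes "rnn Lm" "rnn L0" "rnn L1"
    and "\<And>a i j. summable (\<lambda>n. fA (vm Lm) (vm L0) (vm L1) n a $ i $ j)"
  shows "Gmat Lm L0 L1 i j = rhs Lm L0 L1 (Gmat Lm L0 L1) i j"
  using qbd_eq[OF assms] unfolding rhs_def by blast

lemma QQ_mono:
  assumes "rnn P" "\<And>k l. 0 \<le> X k l" "\<And>k l. X k l \<le> Y k l"
  shows "QQ Sp P X i j \<le> QQ Sp P Y i j"
proof -
  have Y0: "0 \<le> Y k l" for k l using assms(2,3) order_trans by metis
  show ?thesis
  using assms Y0 unfolding QQ_def XX_def rnn_def
  by (intro add_mono sum_mono mult_left_mono mult_mono) (auto intro: sum_nonneg)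
qed

lemma CC_cong: "(\<And>k. k \<in> Sp \<Longrightarrow> X k m = Y k m) \<Longrightarrow> CC Sp P X i m = CC Sp P Y i m"
  unfolding CC_def by (auto intro: sum.cong)

lemma KK_cong: "(\<And>k. k \<in> Sp \<Longrightarrow> X k m = Y k m) \<Longrightarrow> KK Sp P X i m = KK Sp P Y i m"
  unfolding KK_def using CC_cong by metis

lemma sum_swap_mult:
  fixes a :: "'a \<Rightarrow> real"
  shows "(\<Sum>l\<in>A. (\<Sum>m\<in>B. a m * b m l) * c l) = (\<Sum>m\<in>B. a m * (\<Sum>l\<in>A. b m l * c l))"
  unfolding sum_distrib_left sum_distrib_right by (subst sum.swap) (simp add: mult.assoc)

theorem theorem3:
  fixes T Psi :: "('s::finite) \<Rightarrow> 's \<Rightarrow> real"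
    and Sp :: "'s set" and lam :: real
  assumes gen: "is_generator T"
    and Sp_ne: "Sp \<noteq> {}" and Sm_ne: "Sm Sp \<noteq> {}"
    and Psi: "min_nonneg_riccati_sol Sp T Psi"
    and lam_pos: "lam > 0" and lam_ge: "\<forall>i. lam \<ge> \<bar>T i i\<bar>"
  defines "P \<equiv> Plam lam T"
    and "U \<equiv> Umat Sp T Psi"
  defines "Dm \<equiv> blk Sp zm zm zm (smul (1/2) idm)"
    and "D0 \<equiv> blk Sp zm P zm (smul (1/2) P)"
    and "D1 \<equiv> blk Sp P zm (smul (1/2) P) zm"
  defines "A'm \<equiv> blk Sp zm zm zm (smul (1/2) idm)"
    and "A'0 \<equiv> blk Sp (smul (1/2) idm) (smul (1/2) P) zm (smul (1/2) P)"
    and "A'1 \<equiv> blk Sp (smul (1/2) P) zm (smul (1/2) P) zm"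
  defines "Am \<equiv> blk Sp zm zm zm (inv_on (Sm Sp) (\<lambda>i j. idm i j - U i j / lam))"
    and "A0 \<equiv> blk Sp zm P zm zm"
    and "A1 \<equiv> blk Sp P zm zm zm"
  shows "Gmat A'm A'0 A'1 = Gmat Dm D0 D1 \<and> Gmat A'm A'0 A'1 = Gmat Am A0 A1"
proof -
  note P_def[simp del]
  have SmSp: "Sm Sp = -Sp" by (simp add: Sm_def)
  have Pnn: "rnn P"
    unfolding rnn_def
  proof (intro allI)
    fix i j
    show "0 \<le> P i j"
    proof (cases "i = j")
      case True
      have "T i i \<ge> - lam" using lam_ge by (metis abs_le_iff minus_le_iff)
      then have "T i i / lam \<ge> -1" using lam_pos by (simp add: field_simps)
      then show ?thesis using True by (simp add: P_def Plam_def idm_def)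
    next
      case False
      then have "T i j \<ge> 0" using gen by (simp add: is_generator_def)
      then show ?thesis using False lam_pos by (simp add: P_def Plam_def idm_def)
    qed
  qed
  have Prow: "(\<Sum>j\<in>UNIV. P i j) = 1" for i
  proof -
    have "(\<Sum>j\<in>UNIV. T i j) = 0" using gen by (simp add: is_generator_def)
    then have "(\<Sum>j\<in>UNIV. T i j / lam) = 0" by (simp add: sum_divide_distrib[symmetric])
    moreover have "(\<Sum>j\<in>UNIV. idm i j) = 1" by (simp add: idm_def)
    ultimately show ?thesis by (simp add: P_def Plam_def sum.distrib)
  qed
  have Psi_nn: "\<And>i j. i \<in> Sp \<Longrightarrow> j \<notin> Sp \<Longrightarrow> 0 \<le> Psi i j"
    and Psi_ric: "\<And>i j. i \<in> Sp \<Longrightarrow> j \<notin> Sp \<Longrightarrow> riccati Sp T Psi i j = 0"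
    and Psi_min: "\<And>X i j. nonneg_riccati_sol Sp T X \<Longrightarrow> i \<in> Sp \<Longrightarrow> j \<notin> Sp \<Longrightarrow> Psi i j \<le> X i j"
    using Psi unfolding min_nonneg_riccati_sol_def nonneg_riccati_sol_def SmSp by auto

  define G2 where "G2 = Gmat A'm A'0 A'1"
  have nn2: "rnn A'm" "rnn A'0" "rnn A'1"
    unfolding A'm_def A'0_def A'1_def
    by (auto intro!: rnn_blk rnn_smul rnn_zm rnn_idm Pnn)
  have rs2: "(\<Sum>j\<in>UNIV. A'm i j + A'0 i j + A'1 i j) \<le> 1" for i
  proof -
    have "A'm i j + A'0 i j + A'1 i j = idm i j / 2 + P i j / 2" for j
      unfolding A'm_def A'0_def A'1_def by (auto simp: blk_def smul_def zm_def idm_def)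
    then show ?thesis by (simp add: sum.distrib sum_divide_distrib[symmetric] Prow idm_def)
  qed
  have sm2: "\<And>a i j. summable (\<lambda>n. fA (vm A'm) (vm A'0) (vm A'1) n a $ i $ j)"
    using qbd_stoch(1)[OF nn2 rs2] .
  have G2row: "(\<Sum>j\<in>UNIV. G2 i j) \<le> 1" for i
    unfolding G2_def using qbd_stoch(2)[OF nn2 rs2] .
  have G2eq: "G2 i j = rhs A'm A'0 A'1 G2 i j" for i j
    unfolding G2_def by (rule qbd_eq'[OF nn2 sm2])
  have G2nn: "0 \<le> G2 i j" for i j
    unfolding G2_def by (rule Gmat_nonneg[OF nn2 sm2])
  have G2zc: "zc Sp G2"
    unfolding zc_def G2_def by (auto intro!: Gmat_zero_col simp: A'm_def blk_def zm_def)
  have rhs2: "rhs A'm A'0 A'1 X i j =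
     (if j \<in> Sp then 0 else if i \<in> Sp then X i j / 2 + QQ Sp P X i j / 2 else idm i j / 2 + QQ Sp P X i j / 2)"
    if "zc Sp X" for X i j
    unfolding A'm_def A'0_def A'1_def by (rule rhs2_eq[OF that])
  have Ep: "G2 i j = QQ Sp P G2 i j" if "i \<in> Sp" "j \<notin> Sp" for i j
    using G2eq[of i j] rhs2[OF G2zc, of i j] that by simp
  have Em: "2 * G2 i j = idm i j + QQ Sp P G2 i j" if "i \<notin> Sp" "j \<notin> Sp" for i j
    using G2eq[of i j] rhs2[OF G2zc, of i j] that by simp
  have KG2: "(\<Sum>l\<in>-Sp. KK Sp P G2 i l * G2 l j) = idm i j" if "i \<in> -Sp" "j \<in> -Sp" for i j
  proof -
    have "(\<Sum>l\<in>-Sp. KK Sp P G2 i l * G2 l j) = 2 * G2 i j - (\<Sum>m\<in>-Sp. CC Sp P G2 i m * G2 m j)"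
      by (rule KK_mult[OF that])
    also have "(\<Sum>m\<in>-Sp. CC Sp P G2 i m * G2 m j) = QQ Sp P G2 i j" by (simp only: QQ_CC)
    finally show ?thesis using Em[of i j] that by simp
  qed
  have G2K: "(\<Sum>l\<in>-Sp. G2 i l * KK Sp P G2 l j) = idm i j" if "i \<in> -Sp" "j \<in> -Sp" for i j
    by (rule right_inv_left[OF KG2 that])
  have G2ric: "(\<Sum>l\<in>-Sp. G2 i l * KK Sp P G2 l j) = CC Sp P G2 i j" if "i \<in> Sp" "j \<in> -Sp" for i j
  proof -
    have "(\<Sum>l\<in>-Sp. G2 i l * KK Sp P G2 l j) = (\<Sum>l\<in>-Sp. (\<Sum>m\<in>-Sp. CC Sp P G2 i m * G2 m l) * KK Sp P G2 l j)"
    proof (rule sum.cong[OF refl])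
      fix l assume "l \<in> -Sp"
      then have "G2 i l = QQ Sp P G2 i l" using Ep[OF that(1)] by simp
      then have "G2 i l = (\<Sum>m\<in>-Sp. CC Sp P G2 i m * G2 m l)"
        by (simp only: QQ_CC)
      then show "G2 i l * KK Sp P G2 l j = (\<Sum>m\<in>-Sp. CC Sp P G2 i m * G2 m l) * KK Sp P G2 l j" by simp
    qed
    also have "\<dots> = (\<Sum>m\<in>-Sp. CC Sp P G2 i m * (\<Sum>l\<in>-Sp. G2 m l * KK Sp P G2 l j))"
      by (rule sum_swap_mult)
    also have "\<dots> = (\<Sum>m\<in>-Sp. CC Sp P G2 i m * idm m j)"
      using G2K that(2) by (intro sum.cong) auto
    also have "\<dots> = CC Sp P G2 i j" using that(2) by (rule sum_idm_right)
    finally show ?thesis .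
  qed
  have G2sol: "nonneg_riccati_sol Sp T G2"
    unfolding nonneg_riccati_sol_def SmSp
  proof (intro ballI conjI)
    fix i j assume i: "i \<in> Sp" and j: "j \<in> -Sp"
    show "0 \<le> G2 i j" by (rule G2nn)
    have "riccati Sp T G2 i j = - lam * ((\<Sum>l\<in>-Sp. G2 i l * KK Sp P G2 l j) - CC Sp P G2 i j)"
      using riccati_iff[OF lam_pos i j] by (simp only: P_def)
    then show "riccati Sp T G2 i j = 0" using G2ric[OF i j] by simp
  qed
  have PsiG2: "Psi i j \<le> G2 i j" if "i \<in> Sp" "j \<notin> Sp" for i j
    using Psi_min[OF G2sol that] .

  have Psirow: "(\<Sum>j\<in>-Sp. Psi i j) \<le> 1" if "i \<in> Sp" for i
  proof -
    have "(\<Sum>j\<in>-Sp. Psi i j) \<le> (\<Sum>j\<in>-Sp. G2 i j)"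
      using PsiG2 that by (intro sum_mono) auto
    also have "\<dots> \<le> (\<Sum>j\<in>Sp. G2 i j) + (\<Sum>j\<in>-Sp. G2 i j)"
      using G2nn by (simp add: sum_nonneg)
    also have "\<dots> = (\<Sum>j\<in>UNIV. G2 i j)" by (rule sum_split_set[symmetric])
    also have "\<dots> \<le> 1" by (rule G2row)
    finally show ?thesis .
  qed
  define NN where "NN = CC Sp P Psi"
  define B0 where "B0 = blk Sp zm zm zm (\<lambda>i j. NN i j / 2)"
  define B1 where "B1 = blk Sp zm zm (zm::'s rmat) zm"
  define Z where "Z = Gmat A'm B0 B1"
  have NNnn: "0 \<le> NN i j" if "j \<notin> Sp" for i j
    unfolding NN_def CC_def using Pnn Psi_nn that unfolding rnn_def
    by (auto intro!: add_nonneg_nonneg sum_nonneg)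
  have nnZ: "rnn A'm" "rnn B0" "rnn B1"
    using nn2(1) NNnn unfolding B0_def B1_def rnn_def blk_def zm_def by auto
  have rsZ: "(\<Sum>j\<in>UNIV. A'm i j + B0 i j + B1 i j) \<le> 1" for i
  proof (cases "i \<in> Sp")
    case True
    then show ?thesis by (simp add: A'm_def B0_def B1_def blk_def zm_def)
  next
    case False
    have "(\<Sum>j\<in>UNIV. A'm i j + B0 i j + B1 i j) = (\<Sum>j\<in>Sp. A'm i j + B0 i j + B1 i j) + (\<Sum>j\<in>-Sp. A'm i j + B0 i j + B1 i j)"
      by (rule sum_split_set)
    also have "(\<Sum>j\<in>Sp. A'm i j + B0 i j + B1 i j) = 0"
      using False by (simp add: A'm_def B0_def B1_def blk_def zm_def)
    also have "(\<Sum>j\<in>-Sp. A'm i j + B0 i j + B1 i j) = (\<Sum>j\<in>-Sp. idm i j) / 2 + (\<Sum>j\<in>-Sp. NN i j) / 2"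
      using False by (simp add: A'm_def B0_def B1_def blk_def zm_def smul_def sum.distrib sum_divide_distrib)
    also have "(\<Sum>j\<in>-Sp. idm i j) = 1"
      using False sum_idm_left[of i "-Sp" "\<lambda>_. 1"] by simp
    also have "(\<Sum>j\<in>-Sp. NN i j) \<le> 1"
    proof -
      have "(\<Sum>j\<in>-Sp. NN i j) = (\<Sum>j\<in>-Sp. P i j) + (\<Sum>k\<in>Sp. P i k * (\<Sum>j\<in>-Sp. Psi k j))"
        unfolding NN_def CC_def by (simp add: sum.distrib sum_distrib_left sum.swap[of _ Sp])
      also have "(\<Sum>k\<in>Sp. P i k * (\<Sum>j\<in>-Sp. Psi k j)) \<le> (\<Sum>k\<in>Sp. P i k)"
        using Psirow Pnn unfolding rnn_def by (intro sum_mono mult_right_le_one_le) (auto intro: sum_nonneg Psi_nn)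
      also have "(\<Sum>j\<in>-Sp. P i j) + (\<Sum>k\<in>Sp. P i k) = 1"
        using sum_split_set[of "P i" Sp] Prow[of i] by simp
      finally show ?thesis by simp
    qed
    finally show ?thesis by simp
  qed
  have smZ: "\<And>a i j. summable (\<lambda>n. fA (vm A'm) (vm B0) (vm B1) n a $ i $ j)"
    using qbd_stoch(1)[OF nnZ rsZ] .
  have Zeq: "Z i j = rhs A'm B0 B1 Z i j" for i j
    unfolding Z_def by (rule qbd_eq'[OF nnZ smZ])
  have Znn: "0 \<le> Z i j" for i j
    unfolding Z_def by (rule Gmat_nonneg[OF nnZ smZ])
  have Zzc: "zc Sp Z"
    unfolding zc_def Z_def by (auto intro!: Gmat_zero_col simp: A'm_def blk_def zm_def)
  have Zeq2: "2 * Z i j = idm i j + (\<Sum>m\<in>-Sp. NN i m * Z m j)" if "i \<notin> Sp" "j \<notin> Sp" for i j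
  proof -
    have "rhs A'm B0 B1 Z i j = smul (1/2) idm i j + (\<Sum>k\<in>-Sp. NN i k / 2 * Z k j)"
      unfolding A'm_def B0_def B1_def rhs_blk[OF Zzc] using that by (simp add: zm_def)
    then show ?thesis using Zeq[of i j]
      by (simp add: smul_def sum_divide_distrib[symmetric] algebra_simps)
  qed
  have Zrow0: "Z i j = 0" if "i \<in> Sp" for i j
  proof -
    have "rhs A'm B0 B1 Z i j = 0"
      unfolding A'm_def B0_def B1_def rhs_blk[OF Zzc] using that by (simp add: zm_def)
    then show ?thesis using Zeq[of i j] by simp
  qed
  have KZ: "(\<Sum>l\<in>-Sp. KK Sp P Psi i l * Z l j) = idm i j" if "i \<in> -Sp" "j \<in> -Sp" for i j
  proof -
    have "(\<Sum>l\<in>-Sp. KK Sp P Psi i l * Z l j) = 2 * Z i j - (\<Sum>m\<in>-Sp. CC Sp P Psi i m * Z m j)"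
      by (rule KK_mult[OF that])
    then show ?thesis using Zeq2[of i j] that unfolding NN_def by simp
  qed
  have PsiK: "(\<Sum>l\<in>-Sp. Psi i l * KK Sp P Psi l j) = CC Sp P Psi i j" if "i \<in> Sp" "j \<in> -Sp" for i j
  proof -
    have "riccati Sp T Psi i j = - lam * ((\<Sum>l\<in>-Sp. Psi i l * KK Sp P Psi l j) - CC Sp P Psi i j)"
      using riccati_iff[OF lam_pos that] by (simp only: P_def)
    then show ?thesis using Psi_ric[of i j] that lam_pos by simp
  qed
  have CPZ: "(\<Sum>m\<in>-Sp. CC Sp P Psi i m * Z m j) = Psi i j" if "i \<in> Sp" "j \<in> -Sp" for i j
  proof -
    have "(\<Sum>m\<in>-Sp. CC Sp P Psi i m * Z m j) = (\<Sum>m\<in>-Sp. (\<Sum>l\<in>-Sp. Psi i l * KK Sp P Psi l m) * Z m j)"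
      using PsiK[OF that(1)] by (intro sum.cong) auto
    also have "\<dots> = (\<Sum>l\<in>-Sp. Psi i l * (\<Sum>m\<in>-Sp. KK Sp P Psi l m * Z m j))"
      by (rule sum_swap_mult)
    also have "\<dots> = (\<Sum>l\<in>-Sp. Psi i l * idm l j)"
      using KZ that(2) by (intro sum.cong) auto
    also have "\<dots> = Psi i j" using that(2) by (rule sum_idm_right)
    finally show ?thesis .
  qed
  define Xs where "Xs = (\<lambda>i j. if j \<in> Sp then 0 else if i \<in> Sp then Psi i j else Z i j)"
  have Xszc: "zc Sp Xs" by (simp add: zc_def Xs_def)
  have Xsnn: "rnn Xs" using Psi_nn Znn by (simp add: rnn_def Xs_def)
  have QXs: "QQ Sp P Xs i j = (\<Sum>m\<in>-Sp. CC Sp P Psi i m * Z m j)" if "j \<notin> Sp" for i j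
  proof -
    have "QQ Sp P Xs i j = (\<Sum>m\<in>-Sp. CC Sp P Xs i m * Xs m j)" by (simp only: QQ_CC)
    also have "\<dots> = (\<Sum>m\<in>-Sp. CC Sp P Psi i m * Z m j)"
    proof (rule sum.cong[OF refl])
      fix m assume m: "m \<in> -Sp"
      have "CC Sp P Xs i m = CC Sp P Psi i m" by (rule CC_cong) (use m in \<open>simp add: Xs_def\<close>)
      then show "CC Sp P Xs i m * Xs m j = CC Sp P Psi i m * Z m j" using m that by (simp add: Xs_def)
    qed
    finally show ?thesis .
  qed
  have Xssol: "rhs A'm A'0 A'1 Xs i j \<le> Xs i j" for i j
  proof -
    have "rhs A'm A'0 A'1 Xs i j = Xs i j"
    proof (cases "j \<in> Sp")
      case True then show ?thesis unfolding rhs2[OF Xszc] by (simp add: Xs_def)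
    next
      case False
      show ?thesis
      proof (cases "i \<in> Sp")
        case True
        then show ?thesis using False CPZ[of i j] unfolding rhs2[OF Xszc] QXs[OF False] by (simp add: Xs_def)
      next
        case iF: False
        then show ?thesis using False Zeq2[of i j] unfolding rhs2[OF Xszc] QXs[OF False] by (simp add: Xs_def NN_def)
      qed
    qed
    then show ?thesis by simp
  qed
  have G2Xs: "G2 i j \<le> Xs i j" for i j
    unfolding G2_def by (rule qbd_min'(2)[OF nn2 Xsnn Xssol])
  have G2Psi: "G2 i j = Psi i j" if "i \<in> Sp" "j \<notin> Sp" for i j
    using G2Xs[of i j] PsiG2[OF that] that by (simp add: Xs_def)

  define Kf where "Kf = (\<lambda>i j. idm i j - U i j / lam)"
  have Kf_KK: "Kf i j = KK Sp P Psi i j" if "i \<notin> Sp" "j \<notin> Sp" for i j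
  proof -
    have "(\<Sum>k\<in>Sp. P i k * Psi k j) = (\<Sum>k\<in>Sp. T i k * Psi k j) / lam"
      using that by (auto simp: P_def Plam_def idm_def sum_divide_distrib intro!: sum.cong)
    then show ?thesis
      unfolding Kf_def KK_def CC_def U_def Umat_def
      by (simp add: P_def Plam_def add_divide_distrib)
  qed
  have KK_G2_Psi: "KK Sp P G2 i j = KK Sp P Psi i j" if "j \<notin> Sp" for i j
    by (rule KK_cong) (use G2Psi that in auto)
  have KfG2: "(\<Sum>k\<in>-Sp. Kf i k * G2 k j) = idm i j" if "i \<in> -Sp" "j \<in> -Sp" for i j
  proof -
    have "(\<Sum>k\<in>-Sp. Kf i k * G2 k j) = (\<Sum>k\<in>-Sp. KK Sp P G2 i k * G2 k j)"
      using that by (intro sum.cong) (auto simp: Kf_KK KK_G2_Psi)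
    then show ?thesis using KG2[OF that] by simp
  qed
  have G2Kf: "(\<Sum>k\<in>-Sp. G2 i k * Kf k j) = idm i j" if "i \<in> -Sp" "j \<in> -Sp" for i j
    by (rule right_inv_left[OF KfG2 that])
  define Minv where "Minv = inv_on (Sm Sp) (\<lambda>i j. idm i j - U i j / lam)"
  have Minv_prop: "\<forall>i\<in>-Sp. \<forall>j\<in>-Sp. (\<Sum>k\<in>-Sp. Kf i k * Minv k j) = idm i j"
  proof -
    have ex: "\<exists>B. \<forall>i\<in>-Sp. \<forall>j\<in>-Sp. (\<Sum>k\<in>-Sp. Kf i k * B k j) = idm i j"
      using KfG2 by blast
    show ?thesis unfolding Minv_def inv_on_def SmSp Kf_def[symmetric]
      by (rule someI_ex[OF ex])
  qed
  have MinvG2: "Minv i j = G2 i j" if "i \<notin> Sp" "j \<notin> Sp" for i j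
  proof -
    have "G2 i j = (\<Sum>m\<in>-Sp. G2 i m * idm m j)" using that(2) by (simp add: sum_idm_right)
    also have "\<dots> = (\<Sum>m\<in>-Sp. G2 i m * (\<Sum>k\<in>-Sp. Kf m k * Minv k j))"
      using Minv_prop that(2) by (intro sum.cong) auto
    also have "\<dots> = (\<Sum>k\<in>-Sp. (\<Sum>m\<in>-Sp. G2 i m * Kf m k) * Minv k j)"
      by (rule sum_swap_mult[symmetric])
    also have "\<dots> = (\<Sum>k\<in>-Sp. idm i k * Minv k j)"
      using G2Kf that(1) by (intro sum.cong) auto
    also have "\<dots> = Minv i j" using that(1) by (simp add: sum_idm_left)
    finally show ?thesis by simp
  qed

  define G1 where "G1 = Gmat Dm D0 D1"
  have nn1: "rnn Dm" "rnn D0" "rnn D1"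
    unfolding Dm_def D0_def D1_def
    by (auto intro!: rnn_blk rnn_smul rnn_zm rnn_idm Pnn)
  have rs1: "(\<Sum>j\<in>UNIV. Dm i j + D0 i j + D1 i j) \<le> 1" for i
  proof (cases "i \<in> Sp")
    case True
    have "Dm i j + D0 i j + D1 i j = P i j" for j
      using True unfolding Dm_def D0_def D1_def by (auto simp: blk_def smul_def zm_def)
    then show ?thesis by (simp add: Prow)
  next
    case False
    have "Dm i j + D0 i j + D1 i j = idm i j / 2 + P i j / 2" for j
      using False unfolding Dm_def D0_def D1_def by (auto simp: blk_def smul_def zm_def idm_def)
    then show ?thesis by (simp add: sum.distrib sum_divide_distrib[symmetric] Prow idm_def)
  qed
  have sm1: "\<And>a i j. summable (\<lambda>n. fA (vm Dm) (vm D0) (vm D1) n a $ i $ j)"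
    using qbd_stoch(1)[OF nn1 rs1] .
  have G1eq: "G1 i j = rhs Dm D0 D1 G1 i j" for i j
    unfolding G1_def by (rule qbd_eq'[OF nn1 sm1])
  have G1nn: "rnn G1"
    unfolding G1_def rnn_def using Gmat_nonneg[OF nn1 sm1] by blast
  have G1zc: "zc Sp G1"
    unfolding zc_def G1_def by (auto intro!: Gmat_zero_col simp: Dm_def blk_def zm_def)
  have rhs1: "rhs Dm D0 D1 X i j =
     (if j \<in> Sp then 0 else if i \<in> Sp then QQ Sp P X i j else idm i j / 2 + QQ Sp P X i j / 2)"
    if "zc Sp X" for X i j
    unfolding Dm_def D0_def D1_def by (rule rhs1_eq[OF that])
  have G2rnn: "rnn G2" using G2nn by (simp add: rnn_def)
  have G1sup: "rhs A'm A'0 A'1 G1 i j \<le> G1 i j" for i j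
    using G1eq[of i j] G1zc unfolding rhs2[OF G1zc] rhs1[OF G1zc]
    by (auto simp: zc_def split: if_splits)
  have G2sup1: "rhs Dm D0 D1 G2 i j \<le> G2 i j" for i j
    using G2zc Ep[of i j] Em[of i j] unfolding rhs1[OF G2zc]
    by (auto simp: zc_def)
  have G21: "G2 = G1"
  proof (intro ext antisym)
    fix i j
    show "G2 i j \<le> G1 i j" unfolding G2_def by (rule qbd_min'(2)[OF nn2 G1nn G1sup])
    show "G1 i j \<le> G2 i j" unfolding G1_def by (rule qbd_min'(2)[OF nn1 G2rnn G2sup1])
  qed

  define G3 where "G3 = Gmat Am A0 A1"
  have nn3: "rnn Am" "rnn A0" "rnn A1"
  proof -
    show "rnn Am" unfolding Am_def rnn_def blk_def Minv_def[symmetric]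
      using MinvG2 G2nn by (auto simp: zm_def)
    show "rnn A0" "rnn A1" unfolding A0_def A1_def
      by (auto intro!: rnn_blk rnn_zm Pnn)
  qed
  have rhs3: "rhs Am A0 A1 X i j =
     (if j \<in> Sp then 0 else if i \<in> Sp then QQ Sp P X i j else Minv i j)"
    if "zc Sp X" for X i j
    unfolding Am_def A0_def A1_def Minv_def by (rule rhs3_eq[OF that])
  have G2sup3: "rhs Am A0 A1 G2 i j \<le> G2 i j" for i j
    using G2zc Ep[of i j] MinvG2[of i j] unfolding rhs3[OF G2zc]
    by (auto simp: zc_def)
  have sm3: "\<And>a i j. summable (\<lambda>n. fA (vm Am) (vm A0) (vm A1) n a $ i $ j)"
    by (rule qbd_min'(1)[OF nn3 G2rnn G2sup3])
  have G32: "G3 i j \<le> G2 i j" for i j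
    unfolding G3_def by (rule qbd_min'(2)[OF nn3 G2rnn G2sup3])
  have G3eq: "G3 i j = rhs Am A0 A1 G3 i j" for i j
    unfolding G3_def by (rule qbd_eq'[OF nn3 sm3])
  have G3nn: "0 \<le> G3 i j" for i j
    unfolding G3_def by (rule Gmat_nonneg[OF nn3 sm3])
  have G3rnn: "rnn G3" using G3nn by (simp add: rnn_def)
  have G3zc: "zc Sp G3"
    unfolding zc_def G3_def by (auto intro!: Gmat_zero_col simp: Am_def blk_def zm_def)
  have QQ32: "QQ Sp P G3 i j \<le> QQ Sp P G2 i j" for i j
    by (rule QQ_mono[OF Pnn G3nn G32])
  have G3sup2: "rhs A'm A'0 A'1 G3 i j \<le> G3 i j" for i j
  proof (cases "j \<in> Sp")
    case True then show ?thesis using G3zc unfolding rhs2[OF G3zc] by (simp add: zc_def)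
  next
    case jF: False
    show ?thesis
    proof (cases "i \<in> Sp")
      case True
      then show ?thesis using jF G3eq[of i j] unfolding rhs2[OF G3zc] rhs3[OF G3zc] by simp
    next
      case False
      then have "G3 i j = G2 i j" using jF G3eq[of i j] MinvG2[of i j] unfolding rhs3[OF G3zc] by simp
      then show ?thesis using False jF Em[of i j] QQ32[of i j] unfolding rhs2[OF G3zc] by simp
    qed
  qed
  have G23: "G2 = G3"
  proof (intro ext antisym)
    fix i j
    show "G2 i j \<le> G3 i j" unfolding G2_def by (rule qbd_min'(2)[OF nn2 G3rnn G3sup2])
    show "G3 i j \<le> G2 i j" by (rule G32)
  qed
  show ?thesis using G21 G23 unfolding G1_def G2_def G3_def by simp
qed

end
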